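(* Let $l_1(\Gamma, \alpha, \mathcal{A})$ be the set of all families $a = \{a_g\}_{g \in \Gamma}$ of elements of $\mathcal{A}$ such that $a_x \in \mathcal{A}\alpha_x(1)$ and $a_{-x} \in \alpha_x(1)\mathcal{A}$ for all $x \in \Gamma^+$, and $\sum_{g \in \Gamma} \|a_g\| < \infty$, normed by $\|a\| = \sum_{g\in\Gamma}\|a_g\|$. For $a, b \in l_1(\Gamma, \alpha, \mathcal{A})$ define $a\cdot b$ by $$(a \cdot b)_g := \begin{cases} \sum_{\substack{g=x-y \\ x,y>0}} a_x \alpha_{x-y}(b_{-y}) + \sum_{\substack{g=y-x \\ x,y>0}} L_x(a_{-x} b_y) + \sum_{\substack{g=x+y \\ x,y \geq 0}} a_x \alpha_x(b_y), & \text{if } 0 \leq g, \\ \sum_{\substack{g=x-y \\ x,y>0}} \alpha_{y-x}(a_x) b_{-y} + \sum_{\substack{g=y-x \\ x,y>0}} L_y(a_{-x} b_y) + \sum_{\substack{g=-x-y \\ x,y \geq 0}} \alpha_y(a_{-x}) b_{-y}, & \text{if } g < 0, \end{cases}$$ where $x, y$ run through $\Gamma^+$. Then this multiplication is well defined (i.e. $a\cdot b \in l_1(\Gamma,\alpha,\mathcal{A})$), and $\|a \cdot b\| \leq \|a\| \cdot \|b\|$ for all $a, b \in l_1(\Gamma, \alpha, \mathcal{A})$.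
   Context: $\mathcal{A}$ is a C*-algebra with identity $1$, $\Gamma$ is a totally ordered abelian group with identity $0$ and positive cone $\Gamma^+ = \{x \in \Gamma: 0 \le x\}$, and $\alpha: \Gamma^+ \to \mathrm{End}(\mathcal{A})$ is a semigroup homomorphism ($\alpha_0 = \mathrm{Id}$, $\alpha_x\circ\alpha_y = \alpha_{x+y}$) by *-endomorphisms. The system $(\mathcal{A}, \Gamma^+, \alpha)$ is assumed finely representable, equivalently there is a (unique) complete transfer action $L$: continuous linear positive maps $L_x:\mathcal{A}\to\mathcal{A}$, $x\in\Gamma^+$, with $L_{x+y} = L_y \circ L_x$, $L_x(\alpha_x(a)b) = aL_x(b)$ and $\alpha_x(L_x(a)) = \alpha_x(1)a\alpha_x(1)$ for all $a,b\in\mathcal{A}$, $x,y\in\Gamma^+$. *)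

theory Defs
  imports "HOL-Analysis.Analysis"
begin

class cstar_algebra = real_normed_algebra_1 + banach +
  fixes scaleC :: "complex \<Rightarrow> 'a \<Rightarrow> 'a"
    and cstar :: "'a \<Rightarrow> 'a"
  assumes scaleR_scaleC: "scaleR r a = scaleC (complex_of_real r) a"
    and scaleC_add_right: "scaleC c (a + b) = scaleC c a + scaleC c b"
    and scaleC_add_left: "scaleC (c + d) a = scaleC c a + scaleC d a"
    and scaleC_scaleC: "scaleC c (scaleC d a) = scaleC (c * d) a"
    and scaleC_one: "scaleC 1 a = a"
    and norm_scaleC: "norm (scaleC c a) = cmod c * norm a"
    and mult_scaleC_left: "scaleC c a * b = scaleC c (a * b)"
    and mult_scaleC_right: "a * scaleC c b = scaleC c (a * b)"
    and cstar_cstar: "cstar (cstar a) = a"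
    and cstar_add: "cstar (a + b) = cstar a + cstar b"
    and cstar_scaleC: "cstar (scaleC c a) = scaleC (cnj c) (cstar a)"
    and cstar_mult: "cstar (a * b) = cstar b * cstar a"
    and cstar_identity: "norm (cstar a * a) = norm a * norm a"

definition positive_elem :: "'a::cstar_algebra \<Rightarrow> bool" where
  "positive_elem a \<longleftrightarrow> (\<exists>b. a = cstar b * b)"

definition clinear_map :: "('a::cstar_algebra \<Rightarrow> 'b::cstar_algebra) \<Rightarrow> bool" where
  "clinear_map f \<longleftrightarrow> (\<forall>a b. f (a + b) = f a + f b) \<and> (\<forall>c a. f (scaleC c a) = scaleC c (f a))"

definition star_endo :: "('a::cstar_algebra \<Rightarrow> 'a) \<Rightarrow> bool" where
  "star_endo f \<longleftrightarrow> clinear_map f \<and> (\<forall>a b. f (a * b) = f a * f b) \<and> (\<forall>a. f (cstar a) = cstar (f a))"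

definition endo_action :: "('g::linordered_ab_group_add \<Rightarrow> 'a::cstar_algebra \<Rightarrow> 'a) \<Rightarrow> bool" where
  "endo_action \<alpha> \<longleftrightarrow> \<alpha> 0 = id \<and> (\<forall>x y. 0 \<le> x \<longrightarrow> 0 \<le> y \<longrightarrow> \<alpha> (x + y) = \<alpha> x \<circ> \<alpha> y)
     \<and> (\<forall>x. 0 \<le> x \<longrightarrow> star_endo (\<alpha> x))"

definition complete_transfer_action ::
  "('g::linordered_ab_group_add \<Rightarrow> 'a::cstar_algebra \<Rightarrow> 'a) \<Rightarrow> ('g \<Rightarrow> 'a \<Rightarrow> 'a) \<Rightarrow> bool" where
  "complete_transfer_action \<alpha> L \<longleftrightarrow>
     (\<forall>x. 0 \<le> x \<longrightarrow> continuous_on UNIV (L x) \<and> clinear_map (L x)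
                    \<and> (\<forall>a. positive_elem a \<longrightarrow> positive_elem (L x a)))
   \<and> (\<forall>x y. 0 \<le> x \<longrightarrow> 0 \<le> y \<longrightarrow> L (x + y) = L y \<circ> L x)
   \<and> (\<forall>x a b. 0 \<le> x \<longrightarrow> L x (\<alpha> x a * b) = a * L x b)
   \<and> (\<forall>x a. 0 \<le> x \<longrightarrow> \<alpha> x (L x a) = \<alpha> x 1 * a * \<alpha> x 1)"

definition l1 :: "('g::linordered_ab_group_add \<Rightarrow> 'a::cstar_algebra \<Rightarrow> 'a) \<Rightarrow> ('g \<Rightarrow> 'a) set" where
  "l1 \<alpha> = {a. (\<forall>x. 0 \<le> x \<longrightarrow> a x \<in> {c * \<alpha> x 1 | c. True} \<and> a (- x) \<in> {\<alpha> x 1 * c | c. True})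
              \<and> (\<lambda>g. norm (a g)) summable_on UNIV}"

definition l1_norm :: "('g \<Rightarrow> 'a::real_normed_vector) \<Rightarrow> real" where
  "l1_norm a = (\<Sum>\<^sub>\<infinity>g. norm (a g))"

definition prod_terms ::
  "('g::linordered_ab_group_add \<Rightarrow> 'a::cstar_algebra \<Rightarrow> 'a) \<Rightarrow> ('g \<Rightarrow> 'a \<Rightarrow> 'a) \<Rightarrow> ('g \<Rightarrow> 'a) \<Rightarrow> ('g \<Rightarrow> 'a)
    \<Rightarrow> 'g \<Rightarrow> (('g \<times> 'g \<Rightarrow> 'a) \<times> ('g \<times> 'g) set) list" where
  "prod_terms \<alpha> L a b g =
    (if 0 \<le> g then
      [ ((\<lambda>(x, y). a x * \<alpha> (x - y) (b (- y))), {(x, y). 0 < x \<and> 0 < y \<and> g = x - y}),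
        ((\<lambda>(x, y). L x (a (- x) * b y)),        {(x, y). 0 < x \<and> 0 < y \<and> g = y - x}),
        ((\<lambda>(x, y). a x * \<alpha> x (b y)),            {(x, y). 0 \<le> x \<and> 0 \<le> y \<and> g = x + y}) ]
     else
      [ ((\<lambda>(x, y). \<alpha> (y - x) (a x) * b (- y)),  {(x, y). 0 < x \<and> 0 < y \<and> g = x - y}),
        ((\<lambda>(x, y). L y (a (- x) * b y)),        {(x, y). 0 < x \<and> 0 < y \<and> g = y - x}),
        ((\<lambda>(x, y). \<alpha> y (a (- x)) * b (- y)),    {(x, y). 0 \<le> x \<and> 0 \<le> y \<and> g = - x - y}) ])"

definition l1_mult ::
  "('g::linordered_ab_group_add \<Rightarrow> 'a::cstar_algebra \<Rightarrow> 'a) \<Rightarrow> ('g \<Rightarrow> 'a \<Rightarrow> 'a) \<Rightarrow> ('g \<Rightarrow> 'a) \<Rightarrow> ('g \<Rightarrow> 'a) \<Rightarrow> 'g \<Rightarrow> 'a" where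
  "l1_mult \<alpha> L a b g = (\<Sum>(f, S)\<leftarrow>prod_terms \<alpha> L a b g. infsum f S)"

end

theory Submission
  imports Defs "HOL-Computational_Algebra.Formal_Power_Series"
begin


context begin

lemma cstar_zero[simp]: "cstar (0::'a::cstar_algebra) = 0"
  using cstar_add[of "0::'a" 0] by simp

lemma cstar_one[simp]: "cstar (1::'a::cstar_algebra) = 1"
proof -
  have "cstar (1::'a) = cstar 1 * cstar (cstar 1)" by (simp only: cstar_cstar mult_1_right)
  also have "\<dots> = cstar (cstar 1 * 1)" by (rule cstar_mult[symmetric])
  also have "\<dots> = 1" by (simp add: cstar_cstar)
  finally show ?thesis .
qed

lemma cstar_minus: "cstar (- (a::'a::cstar_algebra)) = - cstar a"
  using cstar_add[of a "-a"] by (simp add: eq_neg_iff_add_eq_0 add.commute)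

lemma cstar_diff: "cstar ((a::'a::cstar_algebra) - b) = cstar a - cstar b"
  using cstar_add[of a "-b"] cstar_minus[of b] by simp

lemma cstar_scaleR: "cstar (r *\<^sub>R (a::'a::cstar_algebra)) = r *\<^sub>R cstar a"
  by (simp add: scaleR_scaleC cstar_scaleC)

lemma norm_cstar_le: "norm (cstar (a::'a::cstar_algebra)) \<ge> norm a"
proof (cases "a = 0")
  case True then show ?thesis by simp
next
  case False
  have "norm a * norm a = norm (cstar a * a)" by (simp add: cstar_identity)
  also have "\<dots> \<le> norm (cstar a) * norm a" by (rule norm_mult_ineq)
  finally show ?thesis using False by simp
qed

lemma norm_cstar[simp]: "norm (cstar (a::'a::cstar_algebra)) = norm a"
  using norm_cstar_le[of a] norm_cstar_le[of "cstar a"] by (simp add: cstar_cstar)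

lemma bounded_linear_cstar: "bounded_linear (cstar :: 'a::cstar_algebra \<Rightarrow> 'a)"
  by (rule bounded_linear_intro[where K=1]) (auto simp: cstar_add cstar_scaleR)

lemma cstar_power: "cstar ((a::'a::cstar_algebra) ^ n) = cstar a ^ n"
  by (induction n) (simp_all add: cstar_mult power_Suc2 power_commutes)

lemma scaleC_zero_right[simp]: "scaleC c (0::'a::cstar_algebra) = 0"
  using scaleC_add_right[of c "0::'a" 0] by simp

lemma scaleC_minus_right: "scaleC c (- (a::'a::cstar_algebra)) = - scaleC c a"
  using scaleC_add_right[of c a "-a"] by (simp add: eq_neg_iff_add_eq_0 add.commute)

lemma scaleC_diff_right: "scaleC c ((a::'a::cstar_algebra) - b) = scaleC c a - scaleC c b"
  using scaleC_add_right[of c a "-b"] scaleC_minus_right[of c b] by simp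

lemma scaleC_zero_left[simp]: "scaleC 0 (a::'a::cstar_algebra) = 0"
  using scaleR_scaleC[of 0 a] by simp

lemma scaleC_of_real: "scaleC (complex_of_real r) (a::'a::cstar_algebra) = r *\<^sub>R a"
  by (simp add: scaleR_scaleC)

lemma norm_proj_le1:
  assumes "cstar p = p" "p * p = (p::'a::cstar_algebra)"
  shows "norm p \<le> 1"
proof -
  have "norm p * norm p = norm p" using cstar_identity[of p] assms by simp
  then have "norm p = 0 \<or> norm p = 1" by (metis mult_cancel_left2)
  then show ?thesis by auto
qed

definition sqc :: "nat \<Rightarrow> real" where
  "sqc n = (-1)^n * ((1/2) gchoose n)"

lemma sqc_bound: "\<bar>sqc n\<bar> \<le> 1"
proof (induction n)
  case 0 then show ?case by (simp add: sqc_def)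
next
  case (Suc k)
  have e: "of_nat (Suc k) * ((1/2::real) gchoose Suc k) = (1/2 - of_nat k) * ((1/2) gchoose k)"
    using gbinomial_mult_1[of "1/2::real" k] by (simp add: algebra_simps)
  have "\<bar>(1/2::real) gchoose Suc k\<bar> * of_nat (Suc k) = \<bar>1/2 - of_nat k\<bar> * \<bar>(1/2) gchoose k\<bar>"
    using arg_cong[OF e, of abs] by (simp add: abs_mult mult.commute)
  also have "\<dots> \<le> of_nat (Suc k) * 1"
    using Suc.IH by (intro mult_mono) (auto simp: sqc_def abs_mult)
  finally have "\<bar>(1/2::real) gchoose Suc k\<bar> \<le> 1"
    by (simp add: mult.commute)
  then show ?case by (simp add: sqc_def abs_mult)
qed

lemma sqc_conv: "(\<Sum>i\<le>k. sqc i * sqc (k - i)) = (-1)^k * real (1 choose k)"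
proof -
  have "(\<Sum>i\<le>k. sqc i * sqc (k - i)) = (\<Sum>i\<in>{0..k}. (-1)^k * (((1/2::real) gchoose i) * ((1/2) gchoose (k - i))))"
    unfolding atMost_atLeast0
  proof (rule sum.cong)
    fix i assume "i \<in> {0..k}"
    then have "(-1::real)^i * (-1)^(k-i) = (-1)^k" by (simp flip: power_add)
    then show "sqc i * sqc (k - i) = (-1)^k * (((1/2::real) gchoose i) * ((1/2) gchoose (k - i)))"
      unfolding sqc_def by (metis (no_types, lifting) mult.assoc mult.left_commute)
  qed simp
  also have "\<dots> = (-1)^k * ((1::real) gchoose k)"
    using gbinomial_Vandermonde[of "1/2::real" "1/2" k] by (simp flip: sum_distrib_left)
  also have "(1::real) gchoose k = real (1 choose k)"
    using binomial_gbinomial[of 1 k, where 'a=real] by simp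
  finally show ?thesis .
qed

lemma sqrt_series:
  fixes x :: "'a::cstar_algebra"
  assumes "norm x < 1"
  defines "S \<equiv> (\<Sum>n. sqc n *\<^sub>R x ^ n)"
  shows "S * S = 1 - x" and "cstar x = x \<Longrightarrow> cstar S = S" and "y * x = x * y \<Longrightarrow> y * S = S * y"
proof -
  have ns: "summable (\<lambda>n. norm (sqc n *\<^sub>R x ^ n))"
  proof (rule summable_comparison_test')
    show "summable (\<lambda>n. norm x ^ n)" using assms by (simp add: summable_geometric)
    fix n
    have "norm (sqc n *\<^sub>R x ^ n) = \<bar>sqc n\<bar> * norm (x ^ n)" by simp
    also have "\<dots> \<le> 1 * norm x ^ n"
      using sqc_bound[of n] norm_power_ineq[of x n] by (intro mult_mono) auto
    finally show "norm (norm (sqc n *\<^sub>R x ^ n)) \<le> norm x ^ n" by simp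
  qed
  then have sm: "summable (\<lambda>n. sqc n *\<^sub>R x ^ n)" by (rule summable_norm_cancel)
  have "S * S = (\<Sum>k. \<Sum>i\<le>k. sqc i *\<^sub>R x ^ i * (sqc (k - i) *\<^sub>R x ^ (k - i)))"
    unfolding S_def by (rule Cauchy_product[OF ns ns])
  also have "\<dots> = (\<Sum>k. ((-1)^k * real (1 choose k)) *\<^sub>R x ^ k)"
  proof -
    have "(\<Sum>i\<le>k. sqc i *\<^sub>R x ^ i * (sqc (k - i) *\<^sub>R x ^ (k - i))) = ((-1)^k * real (1 choose k)) *\<^sub>R x ^ k" for k
    proof -
      have "(\<Sum>i\<le>k. sqc i *\<^sub>R x ^ i * (sqc (k - i) *\<^sub>R x ^ (k - i))) = (\<Sum>i\<le>k. (sqc i * sqc (k - i)) *\<^sub>R x ^ k)"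
        by (rule sum.cong) (auto simp flip: power_add)
      also have "\<dots> = (\<Sum>i\<le>k. sqc i * sqc (k - i)) *\<^sub>R x ^ k" by (simp add: scaleR_sum_left)
      finally show ?thesis by (simp add: sqc_conv)
    qed
    then show ?thesis by simp
  qed
  also have "\<dots> = (\<Sum>k\<in>{0,1}. ((-1)^k * real (1 choose k)) *\<^sub>R x ^ k)"
  proof (rule suminf_finite)
    fix n assume "n \<notin> {0::nat, 1}"
    then have "1 < n" by auto
    then show "((-1)^n * real (1 choose n)) *\<^sub>R x ^ n = 0" by simp
  qed simp
  also have "\<dots> = 1 - x" by simp
  finally show "S * S = 1 - x" .
  show "cstar S = S" if "cstar x = x"
  proof -
    have "cstar S = (\<Sum>n. cstar (sqc n *\<^sub>R x ^ n))"
      unfolding S_def by (rule bounded_linear.suminf[OF bounded_linear_cstar sm])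
    also have "\<dots> = S" unfolding S_def by (simp add: cstar_scaleR cstar_power that)
    finally show ?thesis .
  qed
  show "y * S = S * y" if yx: "y * x = x * y"
  proof -
    have yxn: "y * x ^ n = x ^ n * y" for n
      by (induction n) (simp_all, metis mult.assoc yx)
    have "y * S = (\<Sum>n. y * (sqc n *\<^sub>R x ^ n))"
      unfolding S_def by (rule bounded_linear.suminf[OF bounded_linear_mult_right sm])
    also have "\<dots> = (\<Sum>n. (sqc n *\<^sub>R x ^ n) * y)"
      by (simp add: yxn)
    also have "\<dots> = S * y"
      unfolding S_def by (rule bounded_linear.suminf[OF bounded_linear_mult_left sm, symmetric])
    finally show ?thesis .
  qed
qed

end


context begin

lemma clinear_mapD:
  assumes "clinear_map f"
  shows "f (a + b) = f a + f b" "f (scaleC c a) = scaleC c (f a)" "f 0 = 0"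
    "f (- a) = - f a" "f (a - b) = f a - f b" "f (r *\<^sub>R a) = r *\<^sub>R f a"
proof -
  show 1: "f (a + b) = f a + f b" for a b using assms by (simp add: clinear_map_def)
  show "f (scaleC c a) = scaleC c (f a)" for c a using assms by (simp add: clinear_map_def)
  show 0: "f 0 = 0" using 1[of 0 0] by simp
  show m: "f (- a) = - f a" for a using 1[of a "-a"] 0 by (simp add: eq_neg_iff_add_eq_0 add.commute)
  show "f (a - b) = f a - f b" using 1[of a "-b"] m[of b] by simp
  show "f (r *\<^sub>R a) = r *\<^sub>R f a" using assms by (simp add: clinear_map_def scaleR_scaleC)
qed

lemma star_endo_contr_sa:
  fixes \<phi> :: "'a::cstar_algebra \<Rightarrow> 'a"
  assumes se: "star_endo \<phi>" and h: "cstar h = h"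
  shows "norm (\<phi> h) \<le> norm h"
proof (rule dense_ge)
  fix t assume t: "norm h < t"
  have cl: "clinear_map \<phi>" and mu: "\<And>a b. \<phi> (a * b) = \<phi> a * \<phi> b" and st: "\<And>a. \<phi> (cstar a) = cstar (\<phi> a)"
    using se unfolding star_endo_def by blast+
  note lin = clinear_mapD[OF cl]
  have t0: "t > 0" using t norm_ge_zero[of h] by linarith
  define x where "x = (1 / (t * t)) *\<^sub>R (h * h)"
  have "norm x = norm (h * h) / (t * t)" using t0 by (simp add: x_def)
  also have "\<dots> \<le> (norm h * norm h) / (t * t)"
    using t0 by (intro divide_right_mono norm_mult_ineq) auto
  also have "\<dots> < 1" using t t0
    by (simp add: divide_less_eq mult_strict_mono')
  finally have nx: "norm x < 1" .
  have xs: "cstar x = x" by (simp add: x_def cstar_scaleR cstar_mult h)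
  have hx: "h * x = x * h" by (simp add: x_def mult.assoc)
  define S where "S = (\<Sum>n. sqc n *\<^sub>R x ^ n)"
  have SS: "S * S = 1 - x" and Ss: "cstar S = S" and hS: "h * S = S * h"
    using sqrt_series(1)[OF nx] sqrt_series(2)[OF nx xs] sqrt_series(3)[OF nx hx] unfolding S_def by blast+
  define G where "G = t *\<^sub>R S"
  have GG: "G * G = (t * t) *\<^sub>R 1 - h * h"
    using t0 by (simp add: G_def SS x_def algebra_simps)
  have Gs: "cstar G = G" by (simp add: G_def cstar_scaleR Ss)
  have hG: "h * G = G * h" by (simp add: G_def hS)
  define u where "u = h + scaleC \<i> G"
  have cu: "cstar u = h + scaleC (- \<i>) G" by (simp add: u_def cstar_add cstar_scaleC h Gs)
  have "cstar u * u = (h + scaleC (- \<i>) G) * (h + scaleC \<i> G)"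
    unfolding cu by (simp add: u_def)
  also have "\<dots> = h * h + (h * scaleC \<i> G + scaleC (- \<i>) G * h) + scaleC (- \<i>) G * scaleC \<i> G"
    by (simp add: distrib_left distrib_right add.assoc)
  also have "\<dots> = h * h + (scaleC \<i> (h * G) + scaleC (- \<i>) (G * h)) + scaleC (\<i> * - \<i>) (G * G)"
    by (simp only: mult_scaleC_left mult_scaleC_right scaleC_scaleC)
  also have "scaleC \<i> (h * G) + scaleC (- \<i>) (G * h) = 0"
    by (simp add: hG flip: scaleC_add_left)
  also have "scaleC (\<i> * - \<i>) (G * G) = G * G" by (simp add: scaleC_one)
  finally have uu: "cstar u * u = (t * t) *\<^sub>R 1" by (simp add: GG)
  have p1: "norm (\<phi> 1) \<le> 1"
  proof (rule norm_proj_le1)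
    show "cstar (\<phi> 1) = \<phi> 1" using st[of 1] by simp
    show "\<phi> 1 * \<phi> 1 = \<phi> 1" using mu[of 1 1] by simp
  qed
  have "norm (\<phi> u) * norm (\<phi> u) = norm (cstar (\<phi> u) * \<phi> u)" by (simp add: cstar_identity)
  also have "cstar (\<phi> u) * \<phi> u = (t * t) *\<^sub>R \<phi> 1" by (simp add: uu lin flip: st mu)
  also have "norm \<dots> \<le> (t * t) * 1" using p1 t0 by simp
  finally have "norm (\<phi> u) * norm (\<phi> u) \<le> t * t" by simp
  then have "(norm (\<phi> u))\<^sup>2 \<le> t\<^sup>2" by (simp only: power2_eq_square)
  then have nu: "norm (\<phi> u) \<le> t" by (rule power2_le_imp_le) (use t0 in auto)
  have "u + cstar u = h + h + (scaleC \<i> G + scaleC (- \<i>) G)"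
    unfolding cu by (simp only: u_def add_ac)
  also have "scaleC \<i> G + scaleC (- \<i>) G = 0" by (simp only: scaleC_add_left[symmetric] add.right_inverse scaleC_zero_left)
  finally have "u + cstar u = h + h" by simp
  then have "\<phi> (h + h) = \<phi> (u + cstar u)" by simp
  then have "\<phi> h + \<phi> h = \<phi> u + cstar (\<phi> u)" by (simp only: lin(1) st)
  then have "norm (\<phi> h + \<phi> h) \<le> t + t" using nu
    norm_triangle_ineq[of "\<phi> u" "cstar (\<phi> u)"] norm_cstar[of "\<phi> u"] by (simp only:)
  moreover have "\<phi> h + \<phi> h = 2 *\<^sub>R \<phi> h" by (simp add: scaleR_2)
  ultimately show "norm (\<phi> h) \<le> t" by simp
qed

lemma star_endo_contr:
  fixes \<phi> :: "'a::cstar_algebra \<Rightarrow> 'a"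
  assumes se: "star_endo \<phi>"
  shows "norm (\<phi> a) \<le> norm a"
proof -
  have mu: "\<And>a b. \<phi> (a * b) = \<phi> a * \<phi> b" and st: "\<And>a. \<phi> (cstar a) = cstar (\<phi> a)"
    using se unfolding star_endo_def by blast+
  have "norm (\<phi> a) * norm (\<phi> a) = norm (\<phi> (cstar a * a))" by (simp add: cstar_identity mu st)
  also have "\<dots> \<le> norm (cstar a * a)"
    by (rule star_endo_contr_sa[OF se]) (simp add: cstar_mult cstar_cstar)
  also have "\<dots> = norm a * norm a" by (simp add: cstar_identity)
  finally have "norm (\<phi> a) * norm (\<phi> a) \<le> norm a * norm a" .
  then have "(norm (\<phi> a))\<^sup>2 \<le> (norm a)\<^sup>2" by (simp only: power2_eq_square)
  then show ?thesis by (rule power2_le_imp_le) auto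
qed

end



lemma scaleC_minus_left: "scaleC (- z) (a::'a::cstar_algebra) = - scaleC z a"
  using scaleC_add_left[of z "-z" a] by (simp add: eq_neg_iff_add_eq_0 add.commute)

lemma positive_sa: "positive_elem z \<Longrightarrow> cstar z = z"
  unfolding positive_elem_def by (auto simp: cstar_mult cstar_cstar)

lemma bounded_linear_from_cont:
  fixes f :: "'a::cstar_algebra \<Rightarrow> 'a"
  assumes c: "continuous_on UNIV f" and cl: "clinear_map f"
  shows "bounded_linear f"
proof -
  note lin = clinear_mapD[OF cl]
  obtain d where d: "d > 0" "\<And>z. dist z 0 < d \<Longrightarrow> dist (f z) (f 0) < 1"
    using c unfolding continuous_on_iff by (meson UNIV_I zero_less_one)
  have bd: "norm (f a) \<le> norm a * (2 / d)" for a
  proof (cases "a = 0")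
    case True then show ?thesis by (simp add: lin)
  next
    case False
    define r where "r = d / (2 * norm a)"
    have r0: "r > 0" using False d by (simp add: r_def)
    have "norm (r *\<^sub>R a) = d / 2" using False d by (simp add: r_def)
    then have "dist (r *\<^sub>R a) 0 < d" using d by simp
    then have "dist (f (r *\<^sub>R a)) (f 0) < 1" by (rule d(2))
    then have "norm (f (r *\<^sub>R a)) < 1" by (simp add: dist_norm lin)
    then have "r * norm (f a) < 1" using r0 by (simp add: lin)
    then have "norm (f a) < 1 / r" using r0 by (simp add: field_simps)
    also have "1 / r = norm a * (2 / d)" using False d by (simp add: r_def field_simps)
    finally show ?thesis by simp
  qed
  show ?thesis by (rule bounded_linear_intro[OF _ _ bd]) (simp_all add: lin)
qed

locale sys =
  fixes \<alpha> L :: "'g::linordered_ab_group_add \<Rightarrow> 'a::cstar_algebra \<Rightarrow> 'a"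
  assumes ea: "endo_action \<alpha>" and cta: "complete_transfer_action \<alpha> L"
begin

lemma alpha0: "\<alpha> 0 = id" using ea by (simp add: endo_action_def)
lemma alpha_add: "0 \<le> x \<Longrightarrow> 0 \<le> y \<Longrightarrow> \<alpha> (x + y) a = \<alpha> x (\<alpha> y a)"
  using ea by (simp add: endo_action_def)
lemma alpha_se: "0 \<le> x \<Longrightarrow> star_endo (\<alpha> x)"
  using ea by (simp add: endo_action_def)
lemma alpha_lin: "0 \<le> x \<Longrightarrow> clinear_map (\<alpha> x)"
  using alpha_se by (simp add: star_endo_def)
lemma alpha_mult: "0 \<le> x \<Longrightarrow> \<alpha> x (a * b) = \<alpha> x a * \<alpha> x b"
  using alpha_se by (simp add: star_endo_def)
lemma alpha_cstar: "0 \<le> x \<Longrightarrow> \<alpha> x (cstar a) = cstar (\<alpha> x a)"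
  using alpha_se by (simp add: star_endo_def)
lemma alpha_norm: "0 \<le> x \<Longrightarrow> norm (\<alpha> x a) \<le> norm a"
  using alpha_se star_endo_contr by blast
lemma alpha1_sa: "0 \<le> x \<Longrightarrow> cstar (\<alpha> x 1) = \<alpha> x 1"
  using alpha_cstar[of x 1] by simp
lemma alpha1_idem: "0 \<le> x \<Longrightarrow> \<alpha> x 1 * \<alpha> x 1 = \<alpha> x 1"
  using alpha_mult[of x 1 1] by simp
lemma alpha1_norm: "0 \<le> x \<Longrightarrow> norm (\<alpha> x 1) \<le> 1"
  using alpha_norm[of x 1] by simp

lemma L_cont: "0 \<le> x \<Longrightarrow> continuous_on UNIV (L x)"
  using cta by (simp add: complete_transfer_action_def)
lemma L_lin: "0 \<le> x \<Longrightarrow> clinear_map (L x)"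
  using cta by (simp add: complete_transfer_action_def)
lemma L_pos: "0 \<le> x \<Longrightarrow> positive_elem a \<Longrightarrow> positive_elem (L x a)"
  using cta by (simp add: complete_transfer_action_def)
lemma L_add: "0 \<le> x \<Longrightarrow> 0 \<le> y \<Longrightarrow> L (x + y) a = L y (L x a)"
  using cta by (simp add: complete_transfer_action_def)
lemma L_left: "0 \<le> x \<Longrightarrow> L x (\<alpha> x a * b) = a * L x b"
  using cta by (simp add: complete_transfer_action_def)
lemma alpha_L: "0 \<le> x \<Longrightarrow> \<alpha> x (L x a) = \<alpha> x 1 * a * \<alpha> x 1"
  using cta by (simp add: complete_transfer_action_def)

lemma L_bl: "0 \<le> x \<Longrightarrow> bounded_linear (L x)"
  by (rule bounded_linear_from_cont[OF L_cont L_lin])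

lemma L_norm: assumes x: "0 \<le> x" shows "norm (L x c) \<le> norm c"
proof -
  define M where "M = onorm (L x)"
  have M0: "M \<ge> 0" unfolding M_def by (rule onorm_pos_le[OF L_bl[OF x]])
  have Mb: "norm (L x z) \<le> M * norm z" for z unfolding M_def by (rule onorm[OF L_bl[OF x]])
  let ?p = "\<alpha> x 1"
  have sq: "norm (L x z) \<le> sqrt M * norm z" for z
  proof -
    have "\<alpha> x (cstar (L x z)) = ?p * cstar z * ?p"
      using alpha_cstar[OF x, of "L x z"] alpha_L[OF x, of z] alpha1_sa[OF x]
      by (simp add: cstar_mult mult.assoc)
    then have e: "cstar (L x z) * L x z = L x (?p * cstar z * ?p * z)"
      using L_left[OF x, of "cstar (L x z)" z] by simp
    have "norm (L x z) * norm (L x z) = norm (L x (?p * cstar z * ?p * z))"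
      by (simp add: cstar_identity flip: e)
    also have "\<dots> \<le> M * norm (?p * cstar z * ?p * z)" by (rule Mb)
    also have "norm (?p * cstar z * ?p * z) \<le> norm z * norm z"
    proof -
      have "norm (?p * cstar z * ?p * z) \<le> norm ?p * norm (cstar z) * norm ?p * norm z"
        by (meson norm_mult_ineq order_trans mult_right_mono norm_ge_zero)
      also have "\<dots> \<le> 1 * norm z * 1 * norm z"
        using alpha1_norm[OF x] by (intro mult_mono) auto
      finally show ?thesis by simp
    qed
    then have "M * norm (?p * cstar z * ?p * z) \<le> M * (norm z * norm z)"
      using M0 by (rule mult_left_mono)
    also have "M * (norm z * norm z) = (sqrt M * norm z) * (sqrt M * norm z)"
      using M0 by (simp add: algebra_simps real_sqrt_mult_self)
    finally have "(norm (L x z))\<^sup>2 \<le> (sqrt M * norm z)\<^sup>2"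
      by (simp only: power2_eq_square)
    then show ?thesis by (rule power2_le_imp_le) (use M0 in auto)
  qed
  have "M \<le> sqrt M" unfolding M_def by (rule onorm_le) (use sq M_def in auto)
  have "M \<le> 1"
  proof (rule ccontr)
    assume "\<not> M \<le> 1"
    then have s1: "sqrt M > 1" by simp
    have "sqrt M * 1 < sqrt M * sqrt M" using s1 by (intro mult_strict_left_mono) auto
    also have "sqrt M * sqrt M = M" using M0 by simp
    finally show False using \<open>M \<le> sqrt M\<close> by simp
  qed
  have "norm (L x c) \<le> M * norm c" by (rule Mb)
  also have "\<dots> \<le> 1 * norm c" using \<open>M \<le> 1\<close> by (intro mult_right_mono) auto
  finally show ?thesis by simp
qed

lemma L_sa: assumes x: "0 \<le> x" and h: "cstar h = h" shows "cstar (L x h) = L x h"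
proof -
  note lin = clinear_mapD[OF L_lin[OF x]]
  define P where "P = (h + 1) * (h + 1)"
  define Q where "Q = (h - 1) * (h - 1)"
  have "positive_elem P" unfolding P_def positive_elem_def
    by (rule exI[of _ "h + 1"]) (simp add: cstar_add h)
  then have sP: "cstar (L x P) = L x P" by (intro positive_sa L_pos x)
  have "positive_elem Q" unfolding Q_def positive_elem_def
    by (rule exI[of _ "h - 1"]) (simp add: cstar_diff h)
  then have sQ: "cstar (L x Q) = L x Q" by (intro positive_sa L_pos x)
  have "P - Q = h + h + h + h" unfolding P_def Q_def
    by (simp add: algebra_simps)
  also have "\<dots> = (1 + 1 + 1 + 1 :: real) *\<^sub>R h" by (simp only: scaleR_add_left scaleR_one)
  also have "(1 + 1 + 1 + 1 :: real) = 4" by simp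
  finally have "P - Q = 4 *\<^sub>R h" .
  then have "L x (P - Q) = 4 *\<^sub>R L x h" by (simp add: lin)
  moreover have "cstar (L x (P - Q)) = L x (P - Q)" by (simp add: lin cstar_diff sP sQ)
  ultimately have "4 *\<^sub>R cstar (L x h) = 4 *\<^sub>R L x h" by (simp add: cstar_scaleR)
  then show ?thesis by simp
qed

lemma L_cstar: assumes x: "0 \<le> x" shows "L x (cstar c) = cstar (L x c)"
proof -
  note lin = clinear_mapD[OF L_lin[OF x]]
  define h where "h = (1/2) *\<^sub>R (c + cstar c)"
  define k where "k = scaleC (- (\<i> / 2)) (c - cstar c)"
  have hs: "cstar h = h" by (simp add: h_def cstar_scaleR cstar_add cstar_cstar add.commute)
  have "cstar k = scaleC (\<i> / 2) (cstar c - c)"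
    by (simp add: k_def cstar_scaleC cstar_diff cstar_cstar)
  also have "\<dots> = scaleC (\<i> / 2) (- (c - cstar c))" by simp
  also have "\<dots> = k" by (simp only: k_def scaleC_minus_right scaleC_minus_left)
  finally have ks: "cstar k = k" .
  have ik: "scaleC \<i> k = (1/2) *\<^sub>R (c - cstar c)"
  proof -
    have "scaleC \<i> k = scaleC (complex_of_real (1/2)) (c - cstar c)"
      by (simp add: k_def scaleC_scaleC)
    then show ?thesis by (simp add: scaleR_scaleC)
  qed
  have c1: "c = h + scaleC \<i> k"
    unfolding ik h_def by (simp add: algebra_simps flip: scaleR_add_left)
  have c2: "cstar c = h - scaleC \<i> k"
    unfolding ik h_def by (simp add: algebra_simps flip: scaleR_add_left)
  have "L x (cstar c) = L x h - scaleC \<i> (L x k)" by (simp add: c2 lin)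
  also have "\<dots> = cstar (L x h + scaleC \<i> (L x k))"
    by (simp add: cstar_add cstar_scaleC L_sa[OF x hs] L_sa[OF x ks] scaleC_minus_left)
  also have "L x h + scaleC \<i> (L x k) = L x c" by (simp add: c1 lin)
  finally show ?thesis .
qed

lemma L_right: assumes x: "0 \<le> x" shows "L x (c * \<alpha> x d) = L x c * d"
proof -
  have "L x (c * \<alpha> x d) = cstar (L x (cstar (c * \<alpha> x d)))" by (simp add: L_cstar[OF x] cstar_cstar)
  also have "cstar (c * \<alpha> x d) = \<alpha> x (cstar d) * cstar c" by (simp add: cstar_mult alpha_cstar[OF x])
  also have "L x \<dots> = cstar d * cstar (L x c)" by (simp add: L_left[OF x] L_cstar[OF x])
  also have "cstar \<dots> = L x c * d" by (simp add: cstar_mult cstar_cstar)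
  finally show ?thesis .
qed

end



lemma term_bound:
  fixes f :: "'s \<Rightarrow> 'a::cstar_algebra" and h :: "'u \<Rightarrow> real"
  assumes inj: "inj_on \<pi> S" and le: "\<And>z. z \<in> S \<Longrightarrow> norm (f z) \<le> h (\<pi> z)"
    and hs: "h summable_on UNIV" and h0: "\<And>u. h u \<ge> 0"
  shows "f summable_on S" and "norm (infsum f S) \<le> infsum h (\<pi> ` S)"
proof -
  have "h summable_on (\<pi> ` S)" using hs by (rule summable_on_subset_banach) auto
  then have hp: "(h \<circ> \<pi>) summable_on S" using summable_on_reindex[OF inj] by blast
  have nf: "(\<lambda>z. norm (f z)) summable_on S"
    by (rule summable_on_comparison_test[OF hp]) (use le in auto)
  then show fs: "f summable_on S" by (rule abs_summable_summable)
  have "norm (infsum f S) \<le> infsum (\<lambda>z. norm (f z)) S" by (rule norm_infsum_bound[OF nf])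
  also have "\<dots> \<le> infsum (h \<circ> \<pi>) S" by (rule infsum_mono[OF nf hp]) (use le in auto)
  also have "\<dots> = infsum h (\<pi> ` S)" by (rule infsum_reindex[OF inj, symmetric])
  finally show "norm (infsum f S) \<le> infsum h (\<pi> ` S)" .
qed

lemma three_le:
  fixes h :: "'u \<Rightarrow> real"
  assumes hs: "h summable_on UNIV" and h0: "\<And>u. h u \<ge> 0"
    and d: "U1 \<inter> U2 = {}" "U1 \<inter> U3 = {}" "U2 \<inter> U3 = {}"
  shows "infsum h U1 + (infsum h U2 + infsum h U3) \<le> infsum h UNIV"
proof -
  have s: "h summable_on U" for U using hs by (rule summable_on_subset_banach) auto
  have "infsum h U1 + (infsum h U2 + infsum h U3) = infsum h (U1 \<union> (U2 \<union> U3))"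
    using d by (simp add: infsum_Un_disjoint s Int_Un_distrib)
  also have "\<dots> \<le> infsum h UNIV" by (rule infsum_mono_neutral[OF s s]) (auto simp: h0)
  finally show ?thesis .
qed

lemma single_le_infsum:
  fixes f :: "'u \<Rightarrow> real"
  assumes "f summable_on UNIV" "\<And>u. f u \<ge> 0"
  shows "f v \<le> infsum f UNIV"
proof -
  have "infsum f {v} \<le> infsum f UNIV" by (rule infsum_mono_neutral) (use assms in auto)
  then show ?thesis by simp
qed


lemma combine3:
  fixes f1 f2 f3 :: "'s \<Rightarrow> 'a::cstar_algebra" and h :: "'u \<Rightarrow> real"
  assumes hs: "h summable_on UNIV" and h0: "\<And>u. h u \<ge> 0"
    and i1: "inj_on p1 S1" and b1: "\<And>z. z \<in> S1 \<Longrightarrow> norm (f1 z) \<le> h (p1 z)"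
    and i2: "inj_on p2 S2" and b2: "\<And>z. z \<in> S2 \<Longrightarrow> norm (f2 z) \<le> h (p2 z)"
    and i3: "inj_on p3 S3" and b3: "\<And>z. z \<in> S3 \<Longrightarrow> norm (f3 z) \<le> h (p3 z)"
    and d: "p1 ` S1 \<inter> p2 ` S2 = {}" "p1 ` S1 \<inter> p3 ` S3 = {}" "p2 ` S2 \<inter> p3 ` S3 = {}"
  shows "f1 summable_on S1" "f2 summable_on S2" "f3 summable_on S3"
    "norm (infsum f1 S1 + (infsum f2 S2 + infsum f3 S3)) \<le> infsum h UNIV"
proof -
  note t1 = term_bound[OF i1 b1 hs h0] and t2 = term_bound[OF i2 b2 hs h0]
    and t3 = term_bound[OF i3 b3 hs h0]
  show "f1 summable_on S1" "f2 summable_on S2" "f3 summable_on S3"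
    using t1 t2 t3 by auto
  have "norm (infsum f1 S1 + (infsum f2 S2 + infsum f3 S3))
      \<le> norm (infsum f1 S1) + (norm (infsum f2 S2) + norm (infsum f3 S3))"
    by (meson add_left_mono norm_triangle_ineq order_trans)
  also have "\<dots> \<le> infsum h (p1 ` S1) + (infsum h (p2 ` S2) + infsum h (p3 ` S3))"
    using t1(2) t2(2) t3(2) by (intro add_mono) auto
  also have "\<dots> \<le> infsum h UNIV" by (rule three_le[OF hs h0 d])
  finally show "norm (infsum f1 S1 + (infsum f2 S2 + infsum f3 S3)) \<le> infsum h UNIV" .
qed


lemma infsum_mult_fix_right:
  fixes f :: "'s \<Rightarrow> 'a::cstar_algebra"
  assumes "f summable_on S" "\<And>s. s \<in> S \<Longrightarrow> f s * p = f s"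
  shows "infsum f S * p = infsum f S"
proof -
  have "((\<lambda>s. f s * p) has_sum (infsum f S * p)) S"
    by (rule has_sum_bounded_linear[OF bounded_linear_mult_left has_sum_infsum[OF assms(1)]])
  then have "infsum (\<lambda>s. f s * p) S = infsum f S * p" by (rule infsumI)
  moreover have "infsum (\<lambda>s. f s * p) S = infsum f S" by (rule infsum_cong) (use assms(2) in auto)
  ultimately show ?thesis by simp
qed

lemma infsum_mult_fix_left:
  fixes f :: "'s \<Rightarrow> 'a::cstar_algebra"
  assumes "f summable_on S" "\<And>s. s \<in> S \<Longrightarrow> p * f s = f s"
  shows "p * infsum f S = infsum f S"
proof -
  have "((\<lambda>s. p * f s) has_sum (p * infsum f S)) S"
    by (rule has_sum_bounded_linear[OF bounded_linear_mult_right has_sum_infsum[OF assms(1)]])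
  then have "infsum (\<lambda>s. p * f s) S = p * infsum f S" by (rule infsumI)
  moreover have "infsum (\<lambda>s. p * f s) S = infsum f S" by (rule infsum_cong) (use assms(2) in auto)
  ultimately show ?thesis by simp
qed

context sys
begin

lemma l1_right: "a \<in> l1 \<alpha> \<Longrightarrow> 0 \<le> x \<Longrightarrow> a x * \<alpha> x 1 = a x"
  unfolding l1_def using alpha1_idem by (auto simp: mult.assoc)

lemma l1_left: "a \<in> l1 \<alpha> \<Longrightarrow> 0 \<le> x \<Longrightarrow> \<alpha> x 1 * a (- x) = a (- x)"
  unfolding l1_def using alpha1_idem by (force simp flip: mult.assoc)


lemma nb1: "0 \<le> z \<Longrightarrow> norm (c * \<alpha> z d) \<le> norm c * norm d"
  by (meson alpha_norm mult_left_mono norm_ge_zero norm_mult_ineq order_trans)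
lemma nb2: "0 \<le> z \<Longrightarrow> norm (\<alpha> z d * c) \<le> norm d * norm c"
  by (meson alpha_norm mult_right_mono norm_ge_zero norm_mult_ineq order_trans)
lemma nb3: "0 \<le> z \<Longrightarrow> norm (L z (c * d)) \<le> norm c * norm d"
  by (meson L_norm norm_mult_ineq order_trans)

lemma l1_summ: "a \<in> l1 \<alpha> \<Longrightarrow> (\<lambda>g. norm (a g)) summable_on UNIV"
  unfolding l1_def by auto

end
locale sys2 = sys \<alpha> L for \<alpha> L :: "'g::linordered_ab_group_add \<Rightarrow> 'a::cstar_algebra \<Rightarrow> 'a" +
  fixes a b :: "'g \<Rightarrow> 'a"
  assumes la: "a \<in> l1 \<alpha>" and lb: "b \<in> l1 \<alpha>"
begin

definition hh :: "'g \<Rightarrow> 'g \<Rightarrow> real" where "hh g u = norm (a u) * norm (b (g - u))"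
definition HH :: "'g \<Rightarrow> real" where "HH g = infsum (hh g) UNIV"

lemma sa: "(\<lambda>u. norm (a u)) summable_on UNIV" by (rule l1_summ[OF la])
lemma sb: "(\<lambda>u. norm (b u)) summable_on UNIV" by (rule l1_summ[OF lb])

lemma hh0: "hh g u \<ge> 0" by (simp add: hh_def)

lemma hh_summ: "hh g summable_on UNIV"
proof (rule summable_on_comparison_test)
  show "(\<lambda>u. norm (a u) * l1_norm b) summable_on UNIV"
    by (rule summable_on_cmult_left[OF sa])
  fix u
  show "hh g u \<le> norm (a u) * l1_norm b" unfolding hh_def l1_norm_def
    by (intro mult_left_mono single_le_infsum[OF sb]) auto
  show "0 \<le> hh g u" by (rule hh0)
qed

lemma prod_summ: "(\<lambda>(u, v). norm (a u) * norm (b v)) summable_on UNIV"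
proof -
  define F where "F = (\<lambda>(u::'g, v::'g). norm (a u) * norm (b v))"
  have h1: "\<forall>u\<in>UNIV. (\<lambda>v. norm (F (u, v))) summable_on UNIV"
    using summable_on_cmult_right[OF sb] by (simp add: F_def)
  have e: "infsum (\<lambda>v. norm (F (u, v))) UNIV = norm (a u) * l1_norm b" for u
    by (simp add: F_def l1_norm_def infsum_cmult_right')
  have "(\<lambda>u. norm (norm (a u) * l1_norm b)) summable_on UNIV"
    using summable_on_cmult_left[OF sa, of "l1_norm b"] by (simp add: l1_norm_def infsum_nonneg)
  then have h2: "(\<lambda>u. norm (infsum (\<lambda>v. norm (F (u, v))) UNIV)) summable_on UNIV" by (simp only: e)
  have "(\<lambda>z. norm (F z)) summable_on Sigma UNIV (\<lambda>_. UNIV)"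
    using Infinite_Sum.abs_summable_on_Sigma_iff[of F UNIV "\<lambda>_. UNIV"] h1 h2 by blast
  then have "F summable_on Sigma UNIV (\<lambda>_. UNIV)" by (rule abs_summable_summable)
  then show ?thesis by (simp add: F_def)
qed

lemma bij_shift: "bij_betw (\<lambda>(g, u). (u, g - u)) (UNIV :: ('g \<times> 'g) set) UNIV"
  by (rule bij_betwI[where g = "\<lambda>(u, v). (u + v, u)"]) auto

lemma hh_shift: "(\<lambda>(g, u). hh g u) = (\<lambda>z. (\<lambda>(u, v). norm (a u) * norm (b v)) ((\<lambda>(g, u). (u, g - u)) z))"
  by (auto simp: hh_def fun_eq_iff)

lemma hh_prod_summ: "(\<lambda>(g, u). hh g u) summable_on Sigma UNIV (\<lambda>_. UNIV)"
proof -
  have "(\<lambda>z. (\<lambda>(u, v). norm (a u) * norm (b v)) ((\<lambda>(g, u). (u, g - u)) z)) summable_on UNIV"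
    using summable_on_reindex_bij_betw[OF bij_shift, of "\<lambda>(u, v). norm (a u) * norm (b v)"] prod_summ
    by blast
  then show ?thesis unfolding hh_shift[symmetric] by simp
qed

lemma HH_summ: "HH summable_on UNIV"
  unfolding HH_def using summable_on_Sigma_banach[OF hh_prod_summ] by simp

lemma HH_sum: "infsum HH UNIV = l1_norm a * l1_norm b"
proof -
  have "infsum HH UNIV = infsum (\<lambda>(g, u). hh g u) (Sigma UNIV (\<lambda>_. UNIV))"
    unfolding HH_def by (rule infsum_Sigma'_banach[OF hh_prod_summ])
  also have "\<dots> = infsum (\<lambda>(u, v). norm (a u) * norm (b v)) UNIV"
    unfolding hh_shift using infsum_reindex_bij_betw[OF bij_shift, of "\<lambda>(u, v). norm (a u) * norm (b v)"]
    by simp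
  also have "\<dots> = infsum (\<lambda>u. infsum (\<lambda>v. norm (a u) * norm (b v)) UNIV) UNIV"
    using infsum_Sigma'_banach[of "\<lambda>u v. norm (a u) * norm (b v)" UNIV "\<lambda>_. UNIV"] prod_summ by simp
  also have "\<dots> = infsum (\<lambda>u. norm (a u) * l1_norm b) UNIV"
    by (simp add: l1_norm_def infsum_cmult_right')
  also have "\<dots> = l1_norm a * l1_norm b"
    by (simp add: l1_norm_def infsum_cmult_left')
  finally show ?thesis .
qed

lemma pos_case:
  assumes g: "0 \<le> g"
  shows "\<forall>(f, S)\<in>set (prod_terms \<alpha> L a b g). f summable_on S"
    and "norm (l1_mult \<alpha> L a b g) \<le> HH g"
    and "l1_mult \<alpha> L a b g * \<alpha> g 1 = l1_mult \<alpha> L a b g"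
proof -
  define f1 where "f1 = (\<lambda>(x, y). a x * \<alpha> (x - y) (b (- y)))"
  define S1 where "S1 = {(x, y). 0 < x \<and> 0 < y \<and> g = x - y}"
  define f2 where "f2 = (\<lambda>(x, y). L x (a (- x) * b y))"
  define S2 where "S2 = {(x, y). 0 < x \<and> 0 < y \<and> g = y - x}"
  define f3 where "f3 = (\<lambda>(x, y). a x * \<alpha> x (b y))"
  define S3 where "S3 = {(x, y). 0 \<le> x \<and> 0 \<le> y \<and> g = x + y}"
  define p2 :: "'g \<times> 'g \<Rightarrow> 'g" where "p2 = (\<lambda>(x, y). - x)"
  have pt: "prod_terms \<alpha> L a b g = [(f1, S1), (f2, S2), (f3, S3)]"
    using g by (simp add: prod_terms_def f1_def f2_def f3_def S1_def S2_def S3_def)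
  have lm: "l1_mult \<alpha> L a b g = infsum f1 S1 + (infsum f2 S2 + infsum f3 S3)"
    by (simp add: l1_mult_def pt)
  have i1: "inj_on fst S1" by (auto simp: inj_on_def S1_def)
  have i2: "inj_on p2 S2" by (auto simp: inj_on_def S2_def p2_def)
  have i3: "inj_on fst S3" by (auto simp: inj_on_def S3_def)
  have b1: "norm (f1 z) \<le> hh g (fst z)" if zS: "z \<in> S1" for z
  proof -
    obtain x y where z: "z = (x, y)" "0 < x" "0 < y" "g = x - y" using zS by (auto simp: S1_def)
    have "g - x = - y" using z by (simp add: algebra_simps)
    then show ?thesis using z nb1[of "x - y" "a x" "b (- y)"] g by (simp add: f1_def hh_def)
  qed
  have b2: "norm (f2 z) \<le> hh g (p2 z)" if zS: "z \<in> S2" for z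
  proof -
    obtain x y where z: "z = (x, y)" "0 < x" "0 < y" "g = y - x" using zS by (auto simp: S2_def)
    have "g - - x = y" using z by (simp add: algebra_simps)
    then show ?thesis using z nb3[of x "a (- x)" "b y"] by (simp add: f2_def hh_def p2_def)
  qed
  have b3: "norm (f3 z) \<le> hh g (fst z)" if zS: "z \<in> S3" for z
  proof -
    obtain x y where z: "z = (x, y)" "0 \<le> x" "0 \<le> y" "g = x + y" using zS by (auto simp: S3_def)
    have "g - x = y" using z by (simp add: algebra_simps)
    then show ?thesis using z nb1[of x "a x" "b y"] by (simp add: f3_def hh_def)
  qed
  have U1: "fst ` S1 \<subseteq> {u. g < u}" by (auto simp: S1_def)
  have U2: "p2 ` S2 \<subseteq> {u. u < 0}" by (auto simp: S2_def p2_def)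
  have U3: "fst ` S3 \<subseteq> {u. 0 \<le> u \<and> u \<le> g}" by (auto simp: S3_def)
  have d1: "fst ` S1 \<inter> p2 ` S2 = {}" using U1 U2 g by fastforce
  have d2: "fst ` S1 \<inter> fst ` S3 = {}" using U1 U3 by fastforce
  have d3: "p2 ` S2 \<inter> fst ` S3 = {}" using U2 U3 by fastforce
  note c = combine3[OF hh_summ hh0 i1 b1 i2 b2 i3 b3 d1 d2 d3]
  show "\<forall>(f, S)\<in>set (prod_terms \<alpha> L a b g). f summable_on S" using c(1-3) by (simp add: pt)
  show "norm (l1_mult \<alpha> L a b g) \<le> HH g" using c(4) by (simp add: lm HH_def)
  let ?p = "\<alpha> g 1"
  have e1: "f1 s * ?p = f1 s" if sS: "s \<in> S1" for s
  proof -
    obtain x y where z: "s = (x, y)" "0 < x" "0 < y" "g = x - y" using sS by (auto simp: S1_def)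
    have "\<alpha> g (b (- y)) * \<alpha> g 1 = \<alpha> g (b (- y))" using alpha_mult[OF g, of "b (- y)" 1] by simp
    then show ?thesis using z by (simp add: f1_def mult.assoc)
  qed
  have e2: "f2 s * ?p = f2 s" if sS: "s \<in> S2" for s
  proof -
    obtain x y where z: "s = (x, y)" "0 < x" "0 < y" "g = y - x" using sS by (auto simp: S2_def)
    have x0: "0 \<le> x" using z by simp
    have xy: "x + g = y" using z by (simp add: algebra_simps)
    have "L x (a (- x) * b y) * \<alpha> g 1 = L x (a (- x) * b y * \<alpha> x (\<alpha> g 1))"
      by (rule L_right[OF x0, symmetric])
    also have "\<alpha> x (\<alpha> g 1) = \<alpha> y 1" using alpha_add[OF x0 g, of 1] xy by simp
    also have "a (- x) * b y * \<alpha> y 1 = a (- x) * b y"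
      using l1_right[OF lb, of y] z by (simp add: mult.assoc)
    finally show ?thesis using z by (simp add: f2_def)
  qed
  have e3: "f3 s * ?p = f3 s" if sS: "s \<in> S3" for s
  proof -
    obtain x y where z: "s = (x, y)" "0 \<le> x" "0 \<le> y" "g = x + y" using sS by (auto simp: S3_def)
    have "\<alpha> x (b y) * \<alpha> g 1 = \<alpha> x (b y * \<alpha> y 1)"
      using alpha_add[OF z(2) z(3), of 1] alpha_mult[OF z(2), of "b y" "\<alpha> y 1"] z(4) by simp
    also have "b y * \<alpha> y 1 = b y" using l1_right[OF lb z(3)] .
    finally show ?thesis using z by (simp add: f3_def mult.assoc)
  qed
  show "l1_mult \<alpha> L a b g * \<alpha> g 1 = l1_mult \<alpha> L a b g"
    unfolding lm distrib_right
    using infsum_mult_fix_right[OF c(1) e1] infsum_mult_fix_right[OF c(2) e2]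
      infsum_mult_fix_right[OF c(3) e3] by simp
qed

lemma neg_case:
  assumes g: "g < 0"
  shows "\<forall>(f, S)\<in>set (prod_terms \<alpha> L a b g). f summable_on S"
    and "norm (l1_mult \<alpha> L a b g) \<le> HH g"
    and "\<alpha> (- g) 1 * l1_mult \<alpha> L a b g = l1_mult \<alpha> L a b g"
proof -
  define f1 where "f1 = (\<lambda>(x, y). \<alpha> (y - x) (a x) * b (- y))"
  define S1 where "S1 = {(x, y). 0 < x \<and> 0 < y \<and> g = x - y}"
  define f2 where "f2 = (\<lambda>(x, y). L y (a (- x) * b y))"
  define S2 where "S2 = {(x, y). 0 < x \<and> 0 < y \<and> g = y - x}"
  define f3 where "f3 = (\<lambda>(x, y). \<alpha> y (a (- x)) * b (- y))"
  define S3 where "S3 = {(x, y). 0 \<le> x \<and> 0 \<le> y \<and> g = - x - y}"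
  define p2 :: "'g \<times> 'g \<Rightarrow> 'g" where "p2 = (\<lambda>(x, y). - x)"
  have pt: "prod_terms \<alpha> L a b g = [(f1, S1), (f2, S2), (f3, S3)]"
    using g by (simp add: prod_terms_def f1_def f2_def f3_def S1_def S2_def S3_def not_le[symmetric])
  have lm: "l1_mult \<alpha> L a b g = infsum f1 S1 + (infsum f2 S2 + infsum f3 S3)"
    by (simp add: l1_mult_def pt)
  have i1: "inj_on fst S1" by (auto simp: inj_on_def S1_def)
  have i2: "inj_on p2 S2" by (auto simp: inj_on_def S2_def p2_def)
  have i3: "inj_on p2 S3" by (auto simp: inj_on_def S3_def p2_def)
  have b1: "norm (f1 z) \<le> hh g (fst z)" if zS: "z \<in> S1" for z
  proof -
    obtain x y where z: "z = (x, y)" "0 < x" "0 < y" "g = x - y" using zS by (auto simp: S1_def)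
    have "g - x = - y" using z by (simp add: algebra_simps)
    moreover have "0 \<le> y - x"
    proof -
      have "x = g + y" using z by (simp add: algebra_simps)
      moreover have "g + y < y" using g by simp
      ultimately show ?thesis by simp
    qed
    ultimately show ?thesis using z nb2[of "y - x" "a x" "b (- y)"] by (simp add: f1_def hh_def)
  qed
  have b2: "norm (f2 z) \<le> hh g (p2 z)" if zS: "z \<in> S2" for z
  proof -
    obtain x y where z: "z = (x, y)" "0 < x" "0 < y" "g = y - x" using zS by (auto simp: S2_def)
    have "g - - x = y" using z by (simp add: algebra_simps)
    then show ?thesis using z nb3[of y "a (- x)" "b y"] by (simp add: f2_def hh_def p2_def)
  qed
  have b3: "norm (f3 z) \<le> hh g (p2 z)" if zS: "z \<in> S3" for z
  proof -
    obtain x y where z: "z = (x, y)" "0 \<le> x" "0 \<le> y" "g = - x - y" using zS by (auto simp: S3_def)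
    have "g - - x = - y" unfolding z(4) by (simp add: algebra_simps)
    then show ?thesis using z nb2[of y "a (- x)" "b (- y)"] by (simp add: f3_def hh_def p2_def)
  qed
  have U1: "fst ` S1 \<subseteq> {u. 0 < u}" by (auto simp: S1_def)
  have U2: "p2 ` S2 \<subseteq> {u. u < g}" by (auto simp: S2_def p2_def)
  have U3: "p2 ` S3 \<subseteq> {u. g \<le> u \<and> u \<le> 0}" by (auto simp: S3_def p2_def)
  have d1: "fst ` S1 \<inter> p2 ` S2 = {}" using U1 U2 g by fastforce
  have d2: "fst ` S1 \<inter> p2 ` S3 = {}" using U1 U3 by fastforce
  have d3: "p2 ` S2 \<inter> p2 ` S3 = {}" using U2 U3 by fastforce
  note c = combine3[OF hh_summ hh0 i1 b1 i2 b2 i3 b3 d1 d2 d3]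
  show "\<forall>(f, S)\<in>set (prod_terms \<alpha> L a b g). f summable_on S" using c(1-3) by (simp add: pt)
  show "norm (l1_mult \<alpha> L a b g) \<le> HH g" using c(4) by (simp add: lm HH_def)
  let ?p = "\<alpha> (- g) 1"
  have mg: "0 \<le> - g" using g by simp
  have e1: "?p * f1 s = f1 s" if sS: "s \<in> S1" for s
  proof -
    obtain x y where z: "s = (x, y)" "0 < x" "0 < y" "g = x - y" using sS by (auto simp: S1_def)
    have "- g = y - x" using z by simp
    then have "?p * \<alpha> (y - x) (a x) = \<alpha> (y - x) (a x)" using alpha_mult[OF mg, of 1 "a x"] by simp
    then show ?thesis using z by (simp add: f1_def flip: mult.assoc)
  qed
  have e2: "?p * f2 s = f2 s" if sS: "s \<in> S2" for s
  proof -
    obtain x y where z: "s = (x, y)" "0 < x" "0 < y" "g = y - x" using sS by (auto simp: S2_def)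
    have y0: "0 \<le> y" using z by simp
    have xy: "y + - g = x" using z by (simp add: algebra_simps)
    have "\<alpha> (- g) 1 * L y (a (- x) * b y) = L y (\<alpha> y (\<alpha> (- g) 1) * (a (- x) * b y))"
      by (rule L_left[OF y0, symmetric])
    also have "\<alpha> y (\<alpha> (- g) 1) = \<alpha> x 1" using alpha_add[OF y0 mg, of 1] xy by simp
    also have "\<alpha> x 1 * (a (- x) * b y) = a (- x) * b y"
      using l1_left[OF la, of x] z by (simp flip: mult.assoc)
    finally show ?thesis using z by (simp add: f2_def)
  qed
  have e3: "?p * f3 s = f3 s" if sS: "s \<in> S3" for s
  proof -
    obtain x y where z: "s = (x, y)" "0 \<le> x" "0 \<le> y" "g = - x - y" using sS by (auto simp: S3_def)
    have yx: "- g = y + x" unfolding z(4) by (simp add: algebra_simps)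
    have "\<alpha> (- g) 1 * \<alpha> y (a (- x)) = \<alpha> y (\<alpha> x 1 * a (- x))"
      using alpha_add[OF z(3) z(2), of 1] alpha_mult[OF z(3), of "\<alpha> x 1" "a (- x)"] yx by simp
    also have "\<alpha> x 1 * a (- x) = a (- x)" using l1_left[OF la z(2)] .
    finally show ?thesis using z by (simp add: f3_def flip: mult.assoc)
  qed
  show "\<alpha> (- g) 1 * l1_mult \<alpha> L a b g = l1_mult \<alpha> L a b g"
    unfolding lm distrib_left
    using infsum_mult_fix_left[OF c(1) e1] infsum_mult_fix_left[OF c(2) e2]
      infsum_mult_fix_left[OF c(3) e3] by simp
qed

lemma main:
  "(\<forall>g. \<forall>(f, S) \<in> set (prod_terms \<alpha> L a b g). f summable_on S)
         \<and> l1_mult \<alpha> L a b \<in> l1 \<alpha>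
         \<and> l1_norm (l1_mult \<alpha> L a b) \<le> l1_norm a * l1_norm b"
proof (intro conjI allI)
  fix g
  show "\<forall>(f, S) \<in> set (prod_terms \<alpha> L a b g). f summable_on S"
    using pos_case(1)[of g] neg_case(1)[of g] by (cases "0 \<le> g") auto
next
  have bd: "norm (l1_mult \<alpha> L a b g) \<le> HH g" for g
    using pos_case(2)[of g] neg_case(2)[of g] by (cases "0 \<le> g") auto
  have ns: "(\<lambda>g. norm (l1_mult \<alpha> L a b g)) summable_on UNIV"
    by (rule summable_on_comparison_test[OF HH_summ]) (use bd in auto)
  have supp: "l1_mult \<alpha> L a b x \<in> {c * \<alpha> x 1 |c. True} \<and>
      l1_mult \<alpha> L a b (- x) \<in> {\<alpha> x 1 * c |c. True}" if x: "0 \<le> x" for x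
  proof
    show "l1_mult \<alpha> L a b x \<in> {c * \<alpha> x 1 |c. True}"
      using pos_case(3)[OF x] by (metis (mono_tags, lifting) mem_Collect_eq)
    show "l1_mult \<alpha> L a b (- x) \<in> {\<alpha> x 1 * c |c. True}"
    proof (cases "x = 0")
      case True
      then show ?thesis using alpha0 by auto
    next
      case False
      then have "- x < 0" using x by simp
      from neg_case(3)[OF this] show ?thesis by (metis (mono_tags, lifting) mem_Collect_eq minus_minus)
    qed
  qed
  show "l1_mult \<alpha> L a b \<in> l1 \<alpha>" unfolding l1_def using supp ns by blast
  have "l1_norm (l1_mult \<alpha> L a b) \<le> infsum HH UNIV"
    unfolding l1_norm_def by (rule infsum_mono[OF ns HH_summ bd])
  then show "l1_norm (l1_mult \<alpha> L a b) \<le> l1_norm a * l1_norm b" by (simp add: HH_sum)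
qed

end

theorem proposition4p2:
  fixes \<alpha> L :: "'g::linordered_ab_group_add \<Rightarrow> 'a::cstar_algebra \<Rightarrow> 'a"
  assumes "endo_action \<alpha>"
    and "complete_transfer_action \<alpha> L"
    and "a \<in> l1 \<alpha>" and "b \<in> l1 \<alpha>"
  shows "(\<forall>g. \<forall>(f, S) \<in> set (prod_terms \<alpha> L a b g). f summable_on S)
         \<and> l1_mult \<alpha> L a b \<in> l1 \<alpha>
         \<and> l1_norm (l1_mult \<alpha> L a b) \<le> l1_norm a * l1_norm b"
proof -
  interpret sys2 \<alpha> L a b
    by (intro sys2.intro sys.intro sys2_axioms.intro assms)
  show ?thesis by (rule main)
qed


end
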